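(* Let $A=(a_0,\dots,a_{n-1})$ be an integer array with $|a_m-a_{m+1}|=1$ for all $0\le m<n-1$. Let $0\le k\le i<n$ and $x\in\mathbb{Z}$ satisfy $i-a_i+x<k\le i$. Then $\mathrm{FS}_A(k,x)=\mathrm{FS}_A(i,x)$.
   Context: For an integer array $A=(a_0,\dots,a_{n-1})$, $\mathrm{FS}_A(i,x)$, for $0\le i<n$ and $x\in\mathbb{Z}$, denotes the minimal index $j>i$ such that $a_j\le x$, and is $0$ if no such $j$ exists. *)

theory Defs
  imports Main
begin

definition FS :: "int list \<Rightarrow> nat \<Rightarrow> int \<Rightarrow> nat" where
  "FS A i x = (if \<exists>j. i < j \<and> j < length A \<and> A ! j \<le> x
               then (LEAST j. i < j \<and> j < length A \<and> A ! j \<le> x) else 0)"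

end

theory Submission
  imports Defs
begin

lemma lip:
  assumes "\<forall>m. m + 1 < length A \<longrightarrow> \<bar>A ! m - A ! (m + 1)\<bar> = 1"
    and "i < length A"
  shows "d \<le> i \<Longrightarrow> A ! (i - d) \<ge> A ! i - int d"
proof (induction d)
  case 0 then show ?case by simp
next
  case (Suc d)
  have "i - Suc d + 1 = i - d" using Suc.prems by simp
  moreover have "i - Suc d + 1 < length A" using Suc.prems assms(2) by simp
  ultimately have "\<bar>A ! (i - Suc d) - A ! (i - d)\<bar> = 1" using assms(1) by metis
  with Suc show ?case by linarith
qed

theorem claim2:
  fixes A :: "int list" and k i :: nat and x :: int
  assumes "\<forall>m. m + 1 < length A \<longrightarrow> \<bar>A ! m - A ! (m + 1)\<bar> = 1"
    and "k \<le> i" and "i < length A"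
    and "int i - A ! i + x < int k"
  shows "FS A k x = FS A i x"
proof -
  have noj: "A ! j > x" if "k \<le> j" "j \<le> i" for j
  proof -
    have "A ! (i - (i - j)) \<ge> A ! i - int (i - j)"
      using lip[OF assms(1) assms(3), of "i - j"] that by simp
    then show ?thesis using that assms(4) by (simp add: of_nat_diff)
  qed
  have eq: "(\<lambda>j. k < j \<and> j < length A \<and> A ! j \<le> x) = (\<lambda>j. i < j \<and> j < length A \<and> A ! j \<le> x)"
  proof (rule ext, rule iffI)
    fix j assume h: "k < j \<and> j < length A \<and> A ! j \<le> x"
    show "i < j \<and> j < length A \<and> A ! j \<le> x"
    proof (rule ccontr)
      assume "\<not> ?thesis"
      then have "j \<le> i" using h by auto
      with noj[of j] h show False by auto
    qed
  next
    fix j assume "i < j \<and> j < length A \<and> A ! j \<le> x"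
    then show "k < j \<and> j < length A \<and> A ! j \<le> x" using assms(2) by auto
  qed
  show ?thesis unfolding FS_def using eq by metis
qed

end
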